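(* Let $P$ be a program, $s$ a state, $U\subseteq S$ and $\mathtt p\in[0,1)\cap\mathbb Q$. Then $\langle P,s\rangle\models\Box\,\mathbb P_{>\mathtt p}U$ if and only if there exists $n\in\mathbb N$ such that every $\mu\in F_n(P,s)$ satisfies $\mu(U)>\mathtt p$.
   Context: Setting: a set $S$ of states; finitely supported (sub)probability distributions $\mathcal V_{=1,\omega}(X)$, $\mathcal V_{\le1,\omega}(X)$ written $\sum_ip_i\cdot x_i$, $\bot$ zero distribution, $\delta_s$ point mass. Programs $P::=\mathtt{skip}\mid\mathtt a\mid P;P\mid P\parallel P\mid P+_{\mathtt p}P\mid P+P\mid\mathtt{if}\ \mathtt b\ \mathtt{then}\ P\ \mathtt{else}\ P\mid\mathtt{while}\ \mathtt b\ P$ with given $[\![\mathtt a]\!]:S\to\mathcal V_{=1,\omega}(S)$, $[\![\mathtt b]\!]:S\to\{\mathtt{tt},\mathtt{ff}\}$. Small-step $\longrightarrow\subseteq(\mathrm{Pr}\times S)\times\mathcal V_{=1,\omega}(S+\mathrm{Pr}\times S)$: least relation with $\langle\mathtt a,s\rangle\to[\![\mathtt a]\!](s)$; $\langle\mathtt{skip},s\rangle\to1\cdot s$; if $\langle P,s\rangle\to\sum_ip_i\langle P_i,s_i\rangle+\sum_jp_js_j$ then $\langle P;Q,s\rangle\to\sum_ip_i\langle P_i;Q,s_i\rangle+\sum_jp_j\langle Q,s_j\rangle$ and $\langle P\parallel Q,s\rangle\to\sum_ip_i\langle P_i\parallel Q,s_i\rangle+\sum_jp_j\langle Q,s_j\rangle$;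 symmetric rule for $\parallel$ with $Q$ stepping (residual $P$); $\langle P+_{\mathtt p}Q,s\rangle\to\mathtt p\mu+(1-\mathtt p)\nu$ if $\langle P,s\rangle\to\mu,\langle Q,s\rangle\to\nu$; $\langle P+Q,s\rangle\to\mu$ if $\langle P,s\rangle\to\mu$ or $\langle Q,s\rangle\to\mu$; $\mathtt{if}$ steps with probability 1 to $\langle P,s\rangle$/$\langle Q,s\rangle$ according to $[\![\mathtt b]\!](s)$; $\langle\mathtt{while}\ \mathtt b\ P,s\rangle\to1\cdot\langle P;\mathtt{while}\ \mathtt b\ P,s\rangle$ if $\mathtt{tt}$, $\to1\cdot s$ if $\mathtt{ff}$. Schedulers: partial maps $\mathcal S$ from $I=((\mathrm{Pr}\times S)\times\mathcal V_{=1,\omega}(S+\mathrm{Pr}\times S))^*\times(\mathrm{Pr}\times S)$ (elements $h\langle P,s\rangle$) to $\mathcal V_{=1,\omega}(S+\mathrm{Pr}\times S)$ whose value at $h\langle P,s\rangle$ (if defined) is a finite convex combination of $\{\mu\mid\langle P,s\rangle\to\mu\}$. Big-step: $h\langle P,s\rangle\Downarrow^{\mathcal S,0}\bot$; $h\langle P,s\rangle\Downarrow^{\mathcal S,n+1}\sum_kp_k(\sum_ip_{k,i}\mu_{k,i}+\sum_jp_{k,j}s_{k,j})$ whenever $\mathcal S(h\langle P,s\rangle)=\sum_kp_k\nu_k$, $\nu_k=\sum_ip_{k,i}\langle P_{k,i},s_{k,i}\rangle+\sum_jp_{k,j}s_{k,j}$, and $h\langle P,s\rangle\nu_k\langle P_{k,i},s_{k,i}\rangle\Downarrow^{\mathcal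 S,n}\mu_{k,i}$ for all $k,i$. $\mathcal S$ is non-blocking w.r.t. $\langle P,s\rangle$ if for every $n$ some $\mu$ has $\langle P,s\rangle\Downarrow^{\mathcal S,n}\mu$. $\langle P,s\rangle\models\Box\,\mathbb P_{>\mathtt p}U$ means: for every scheduler $\mathcal S$ non-blocking w.r.t. $\langle P,s\rangle$ there exist $n\in\mathbb N$ and $\mu$ with $\langle P,s\rangle\Downarrow^{\mathcal S,n}\mu$ and $\mu(U)>\mathtt p$. Sets $F_n(P,s)$: $F_0=\{\bot\}$, $F_{n+1}(P,s)=\bigcup\{\sum_ip_i\cdot F_n(P_i,s_i)+\sum_jp_j\cdot\delta_{s_j}\mid\langle P,s\rangle\to\sum_ip_i\langle P_i,s_i\rangle+\sum_jp_js_j\}$ (Minkowski sums/scalings). *)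

theory Defs
  imports Complex_Main
begin

text \<open>Finitely supported (sub)probability distributions are represented as
  real-valued functions; the support is the set of points of nonzero mass.\<close>

type_synonym 'x dist = "'x \<Rightarrow> real"

definition supp :: "'x dist \<Rightarrow> 'x set" where
  "supp \<mu> = {x. \<mu> x \<noteq> 0}"

definition is_dist :: "'x dist \<Rightarrow> bool" where
  "is_dist \<mu> \<longleftrightarrow> (\<forall>x. 0 \<le> \<mu> x) \<and> finite (supp \<mu>) \<and> sum \<mu> (supp \<mu>) = 1"

definition mass :: "'x dist \<Rightarrow> 'x set \<Rightarrow> real" where
  "mass \<mu> U = sum \<mu> (supp \<mu> \<inter> U)"

definition zero_dist :: "'x dist" where
  "zero_dist = (\<lambda>_. 0)"

definition point :: "'x \<Rightarrow> 'x dist" where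
  "point x = (\<lambda>y. if y = x then 1 else 0)"

definition dmap :: "('x \<Rightarrow> 'y) \<Rightarrow> 'x dist \<Rightarrow> 'y dist" where
  "dmap f \<mu> = (\<lambda>y. sum \<mu> {x \<in> supp \<mu>. f x = y})"

datatype ('a, 'b) prog =
    Skip
  | Act 'a
  | Seq "('a, 'b) prog" "('a, 'b) prog"
  | Par "('a, 'b) prog" "('a, 'b) prog"
  | PCh real "('a, 'b) prog" "('a, 'b) prog"
  | NCh "('a, 'b) prog" "('a, 'b) prog"
  | If 'b "('a, 'b) prog" "('a, 'b) prog"
  | While 'b "('a, 'b) prog"

type_synonym ('a, 'b, 's) conf = "('a, 'b) prog \<times> 's"
type_synonym ('a, 'b, 's) res = "'s + ('a, 'b) prog \<times> 's"

definition seq_cont :: "('a, 'b) prog \<Rightarrow> ('a, 'b, 's) res \<Rightarrow> ('a, 'b, 's) res" where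
  "seq_cont Q r = (case r of Inl t \<Rightarrow> Inr (Q, t) | Inr (P', t) \<Rightarrow> Inr (Seq P' Q, t))"

definition parL_cont :: "('a, 'b) prog \<Rightarrow> ('a, 'b, 's) res \<Rightarrow> ('a, 'b, 's) res" where
  "parL_cont Q r = (case r of Inl t \<Rightarrow> Inr (Q, t) | Inr (P', t) \<Rightarrow> Inr (Par P' Q, t))"

definition parR_cont :: "('a, 'b) prog \<Rightarrow> ('a, 'b, 's) res \<Rightarrow> ('a, 'b, 's) res" where
  "parR_cont P r = (case r of Inl t \<Rightarrow> Inr (P, t) | Inr (Q', t) \<Rightarrow> Inr (Par P Q', t))"

inductive step :: "('a \<Rightarrow> 's \<Rightarrow> 's dist) \<Rightarrow> ('b \<Rightarrow> 's \<Rightarrow> bool) \<Rightarrow>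
    ('a, 'b) prog \<Rightarrow> 's \<Rightarrow> ('a, 'b, 's) res dist \<Rightarrow> bool"
  for act test where
  st_act: "step act test (Act a) s (dmap Inl (act a s))"
| st_skip: "step act test Skip s (point (Inl s))"
| st_seq: "step act test P s \<mu> \<Longrightarrow> step act test (Seq P Q) s (dmap (seq_cont Q) \<mu>)"
| st_parL: "step act test P s \<mu> \<Longrightarrow> step act test (Par P Q) s (dmap (parL_cont Q) \<mu>)"
| st_parR: "step act test Q s \<mu> \<Longrightarrow> step act test (Par P Q) s (dmap (parR_cont P) \<mu>)"
| st_pch: "\<lbrakk>0 \<le> p; p \<le> 1; step act test P s \<mu>; step act test Q s \<nu>\<rbrakk> \<Longrightarrow>
           step act test (PCh p P Q) s (\<lambda>x. p * \<mu> x + (1 - p) * \<nu> x)"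
| st_nchL: "step act test P s \<mu> \<Longrightarrow> step act test (NCh P Q) s \<mu>"
| st_nchR: "step act test Q s \<mu> \<Longrightarrow> step act test (NCh P Q) s \<mu>"
| st_ifT: "test b s \<Longrightarrow> step act test (If b P Q) s (point (Inr (P, s)))"
| st_ifF: "\<not> test b s \<Longrightarrow> step act test (If b P Q) s (point (Inr (Q, s)))"
| st_whileT: "test b s \<Longrightarrow> step act test (While b P) s (point (Inr (Seq P (While b P), s)))"
| st_whileF: "\<not> test b s \<Longrightarrow> step act test (While b P) s (point (Inl s))"

text \<open>Histories h<P,s>: a list of (configuration, chosen transition) pairs followed by
  the current configuration. Schedulers are partial maps from these to distributions.\<close>
type_synonym ('a, 'b, 's) hist =
  "(('a, 'b, 's) conf \<times> ('a, 'b, 's) res dist) list \<times> ('a, 'b, 's) conf"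

type_synonym ('a, 'b, 's) sched = "('a, 'b, 's) hist \<Rightarrow> ('a, 'b, 's) res dist option"

definition comb :: "(real \<times> 'x dist) list \<Rightarrow> 'x dist" where
  "comb ws = (\<lambda>x. \<Sum>k<length ws. fst (ws ! k) * snd (ws ! k) x)"

definition convex_steps :: "('a \<Rightarrow> 's \<Rightarrow> 's dist) \<Rightarrow> ('b \<Rightarrow> 's \<Rightarrow> bool) \<Rightarrow>
    ('a, 'b, 's) conf \<Rightarrow> (real \<times> ('a, 'b, 's) res dist) list \<Rightarrow> bool" where
  "convex_steps act test c ws \<longleftrightarrow>
     (\<forall>k<length ws. 0 \<le> fst (ws ! k) \<and> step act test (fst c) (snd c) (snd (ws ! k)))
     \<and> (\<Sum>k<length ws. fst (ws ! k)) = 1"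

definition valid_sched :: "('a \<Rightarrow> 's \<Rightarrow> 's dist) \<Rightarrow> ('b \<Rightarrow> 's \<Rightarrow> bool) \<Rightarrow>
    ('a, 'b, 's) sched \<Rightarrow> bool" where
  "valid_sched act test Sc \<longleftrightarrow>
     (\<forall>h c d. Sc (h, c) = Some d \<longrightarrow> (\<exists>ws. convex_steps act test c ws \<and> d = comb ws))"

primrec bigstep :: "('a \<Rightarrow> 's \<Rightarrow> 's dist) \<Rightarrow> ('b \<Rightarrow> 's \<Rightarrow> bool) \<Rightarrow> ('a, 'b, 's) sched \<Rightarrow> nat \<Rightarrow>
    (('a, 'b, 's) conf \<times> ('a, 'b, 's) res dist) list \<Rightarrow> ('a, 'b, 's) conf \<Rightarrow> 's dist \<Rightarrow> bool" where
  "bigstep act test Sc 0 h c \<mu> \<longleftrightarrow> \<mu> = zero_dist"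
| "bigstep act test Sc (Suc n) h c \<mu> \<longleftrightarrow>
     (\<exists>ws m. convex_steps act test c ws \<and> Sc (h, c) = Some (comb ws)
        \<and> (\<forall>k<length ws. \<forall>c'. snd (ws ! k) (Inr c') \<noteq> 0 \<longrightarrow>
              bigstep act test Sc n (h @ [(c, snd (ws ! k))]) c' (m k c'))
        \<and> \<mu> = (\<lambda>t. \<Sum>k<length ws. fst (ws ! k) *
                  ((\<Sum>c'\<in>{c'. snd (ws ! k) (Inr c') \<noteq> 0}. snd (ws ! k) (Inr c') * m k c' t)
                   + snd (ws ! k) (Inl t))))"

definition non_blocking :: "('a \<Rightarrow> 's \<Rightarrow> 's dist) \<Rightarrow> ('b \<Rightarrow> 's \<Rightarrow> bool) \<Rightarrow>
    ('a, 'b, 's) sched \<Rightarrow> ('a, 'b) prog \<Rightarrow> 's \<Rightarrow> bool" where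
  "non_blocking act test Sc P s \<longleftrightarrow> (\<forall>n. \<exists>\<mu>. bigstep act test Sc n [] (P, s) \<mu>)"

definition sat_box :: "('a \<Rightarrow> 's \<Rightarrow> 's dist) \<Rightarrow> ('b \<Rightarrow> 's \<Rightarrow> bool) \<Rightarrow>
    ('a, 'b) prog \<Rightarrow> 's \<Rightarrow> real \<Rightarrow> 's set \<Rightarrow> bool" where
  "sat_box act test P s p U \<longleftrightarrow>
     (\<forall>Sc. valid_sched act test Sc \<longrightarrow> non_blocking act test Sc P s \<longrightarrow>
        (\<exists>n \<mu>. bigstep act test Sc n [] (P, s) \<mu> \<and> mass \<mu> U > p))"

primrec Fset :: "('a \<Rightarrow> 's \<Rightarrow> 's dist) \<Rightarrow> ('b \<Rightarrow> 's \<Rightarrow> bool) \<Rightarrow> nat \<Rightarrow>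
    ('a, 'b) prog \<Rightarrow> 's \<Rightarrow> 's dist set" where
  "Fset act test 0 P s = {zero_dist}"
| "Fset act test (Suc n) P s =
     {\<mu>. \<exists>\<nu> f. step act test P s \<nu>
          \<and> (\<forall>c'. \<nu> (Inr c') \<noteq> 0 \<longrightarrow> f c' \<in> Fset act test n (fst c') (snd c'))
          \<and> \<mu> = (\<lambda>t. (\<Sum>c'\<in>{c'. \<nu> (Inr c') \<noteq> 0}. \<nu> (Inr c') * f c' t) + \<nu> (Inl t))}"

end

theory Submission
  imports Defs
begin


lemma mass_alt: "finite B \<Longrightarrow> supp \<mu> \<subseteq> B \<Longrightarrow> mass \<mu> U = sum \<mu> (B \<inter> U)"
  unfolding mass_def
  by (rule sum.mono_neutral_left) (auto simp: supp_def)

lemma supp_sum_fin: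
  assumes "finite I" "\<forall>i\<in>I. finite (supp (f i))"
  shows "finite (supp (\<lambda>t. \<Sum>i\<in>I. f i t))"
proof -
  have "supp (\<lambda>t. \<Sum>i\<in>I. f i t) \<subseteq> (\<Union>i\<in>I. supp (f i))"
    by (auto simp: supp_def intro: ccontr sum.neutral)
  then show ?thesis using assms by (meson finite_UN_I finite_subset)
qed

lemma mass_sum:
  assumes "finite I" "\<forall>i\<in>I. finite (supp (f i))"
  shows "mass (\<lambda>t. \<Sum>i\<in>I. f i t) U = (\<Sum>i\<in>I. mass (f i) U)"
proof -
  let ?B = "\<Union>i\<in>I. supp (f i)"
  have fB: "finite ?B" using assms by blast
  have "supp (\<lambda>t. \<Sum>i\<in>I. f i t) \<subseteq> ?B"
    by (auto simp: supp_def intro: ccontr sum.neutral)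
  then have "mass (\<lambda>t. \<Sum>i\<in>I. f i t) U = (\<Sum>t\<in>?B \<inter> U. \<Sum>i\<in>I. f i t)"
    by (rule mass_alt[OF fB])
  also have "\<dots> = (\<Sum>i\<in>I. \<Sum>t\<in>?B \<inter> U. f i t)" by (rule sum.swap)
  also have "\<dots> = (\<Sum>i\<in>I. mass (f i) U)"
    by (rule sum.cong[OF refl], rule mass_alt[symmetric, OF fB]) auto
  finally show ?thesis .
qed

lemma supp_scale: "finite (supp \<mu>) \<Longrightarrow> finite (supp (\<lambda>t. a * \<mu> t))"
  by (rule finite_subset[of _ "supp \<mu>"]) (auto simp: supp_def)

lemma mass_scale: "mass (\<lambda>t. a * \<mu> t) U = a * mass \<mu> U"
proof (cases "a = 0")
  case True then show ?thesis by (simp add: mass_def supp_def)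
next
  case False
  then have "supp (\<lambda>t. a * \<mu> t) = supp \<mu>" by (auto simp: supp_def)
  then show ?thesis by (simp add: mass_def sum_distrib_left)
qed

lemma supp_add: "finite (supp \<mu>) \<Longrightarrow> finite (supp \<nu>) \<Longrightarrow> finite (supp (\<lambda>t. \<mu> t + \<nu> t))"
  by (rule finite_subset[of _ "supp \<mu> \<union> supp \<nu>"]) (auto simp: supp_def)

lemma mass_add:
  assumes "finite (supp \<mu>)" "finite (supp \<nu>)"
  shows "mass (\<lambda>t. \<mu> t + \<nu> t) U = mass \<mu> U + mass \<nu> U"
proof -
  let ?B = "supp \<mu> \<union> supp \<nu>"
  have "mass (\<lambda>t. \<mu> t + \<nu> t) U = sum (\<lambda>t. \<mu> t + \<nu> t) (?B \<inter> U)"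
    by (rule mass_alt) (use assms in \<open>auto simp: supp_def\<close>)
  also have "\<dots> = sum \<mu> (?B \<inter> U) + sum \<nu> (?B \<inter> U)" by (rule sum.distrib)
  also have "\<dots> = mass \<mu> U + mass \<nu> U"
    using assms by (simp add: mass_alt[symmetric])
  finally show ?thesis .
qed

lemma mass_nonneg: "\<forall>x. 0 \<le> \<mu> x \<Longrightarrow> 0 \<le> mass \<mu> U"
  by (simp add: mass_def sum_nonneg)

lemma mass_zero[simp]: "mass zero_dist U = 0"
  by (simp add: mass_def zero_dist_def supp_def)

lemma supp_zero[simp]: "supp zero_dist = {}"
  by (simp add: zero_dist_def supp_def)

lemma fin_inr: "finite (supp \<nu>) \<Longrightarrow> finite {c'. \<nu> (Inr c') \<noteq> 0}"
proof -
  assume "finite (supp \<nu>)"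
  then have "finite (Inr -` supp \<nu>)" by (rule finite_vimageI) simp
  moreover have "{c'. \<nu> (Inr c') \<noteq> 0} = Inr -` supp \<nu>" by (auto simp: supp_def)
  ultimately show ?thesis by simp
qed

lemma fin_inl: "finite (supp \<nu>) \<Longrightarrow> finite (supp (\<lambda>t. \<nu> (Inl t)))"
proof -
  assume "finite (supp \<nu>)"
  then have "finite (Inl -` supp \<nu>)" by (rule finite_vimageI) simp
  moreover have "supp (\<lambda>t. \<nu> (Inl t)) = Inl -` supp \<nu>" by (auto simp: supp_def)
  ultimately show ?thesis by simp
qed


lemma comb_single[simp]: "comb [(1, \<nu>)] = \<nu>"
  by (simp add: comb_def)

lemma dmap_props:
  assumes "\<forall>x. 0 \<le> \<mu> x" "finite (supp \<mu>)"
  shows "(\<forall>x. 0 \<le> dmap f \<mu> x) \<and> finite (supp (dmap f \<mu>))"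
proof
  show "\<forall>x. 0 \<le> dmap f \<mu> x" using assms by (simp add: dmap_def sum_nonneg)
  have "supp (dmap f \<mu>) \<subseteq> f ` supp \<mu>"
  proof (rule subsetI, rule ccontr)
    fix y assume "y \<in> supp (dmap f \<mu>)" "y \<notin> f ` supp \<mu>"
    then have "{x \<in> supp \<mu>. f x = y} = {}" by auto
    then have "dmap f \<mu> y = 0" unfolding dmap_def by (simp only: sum.empty)
    then show False using \<open>y \<in> supp (dmap f \<mu>)\<close> by (simp add: supp_def)
  qed
  then show "finite (supp (dmap f \<mu>))" using assms by (meson finite_imageI finite_subset)
qed

inductive_cases skipE: "step act test Skip s \<nu>"
inductive_cases actE: "step act test (Act a) s \<nu>"
inductive_cases seqE: "step act test (Seq P Q) s \<nu>"
inductive_cases parE: "step act test (Par P Q) s \<nu>"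
inductive_cases pchE: "step act test (PCh p P Q) s \<nu>"
inductive_cases nchE: "step act test (NCh P Q) s \<nu>"
inductive_cases ifE: "step act test (If b P Q) s \<nu>"
inductive_cases whileE: "step act test (While b P) s \<nu>"

lemma step_fin: "finite {\<nu>. step act test P s \<nu>}"
proof (induction P arbitrary: s)
  case Skip
  have "{\<nu>. step act test Skip s \<nu>} \<subseteq> {point (Inl s)}" by (auto elim: skipE)
  then show ?case by (rule finite_subset) simp
next
  case (Act a)
  have "{\<nu>. step act test (Act a) s \<nu>} \<subseteq> {dmap Inl (act a s)}" by (auto elim: actE)
  then show ?case by (rule finite_subset) simp
next
  case (Seq P Q)
  have "{\<nu>. step act test (Seq P Q) s \<nu>} \<subseteq> dmap (seq_cont Q) ` {\<nu>. step act test P s \<nu>}"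
    by (auto elim: seqE)
  then show ?case using Seq by (meson finite_imageI finite_subset)
next
  case (Par P Q)
  have "{\<nu>. step act test (Par P Q) s \<nu>} \<subseteq> dmap (parL_cont Q) ` {\<nu>. step act test P s \<nu>}
     \<union> dmap (parR_cont P) ` {\<nu>. step act test Q s \<nu>}"
    by (auto elim: parE)
  then show ?case using Par by (meson finite_imageI finite_subset finite_UnI)
next
  case (PCh p P Q)
  have "{\<nu>. step act test (PCh p P Q) s \<nu>} \<subseteq> (\<lambda>(\<mu>,\<nu>). \<lambda>x. p * \<mu> x + (1 - p) * \<nu> x) `
      ({\<nu>. step act test P s \<nu>} \<times> {\<nu>. step act test Q s \<nu>})"
    by (auto elim!: pchE)
  then show ?case by (rule finite_subset) (use PCh in \<open>blast intro: finite_imageI finite_cartesian_product\<close>)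
next
  case (NCh P Q)
  have "{\<nu>. step act test (NCh P Q) s \<nu>} \<subseteq> {\<nu>. step act test P s \<nu>} \<union> {\<nu>. step act test Q s \<nu>}"
    by (auto elim: nchE)
  then show ?case using NCh by (meson finite_subset finite_UnI)
next
  case (If b P Q)
  have "{\<nu>. step act test (If b P Q) s \<nu>} \<subseteq> {point (Inr (P, s)), point (Inr (Q, s))}"
    by (auto elim: ifE)
  then show ?case by (rule finite_subset) simp
next
  case (While b P)
  have "{\<nu>. step act test (While b P) s \<nu>} \<subseteq> {point (Inr (Seq P (While b P), s)), point (Inl s)}"
    by (auto elim: whileE)
  then show ?case by (rule finite_subset) simp
qed




lemma inner_mass:
  assumes "finite A" "\<forall>c'\<in>A. finite (supp (f c'))" "finite (supp b)"
  shows "mass (\<lambda>t. (\<Sum>c'\<in>A. a c' * f c' t) + b t) U = (\<Sum>c'\<in>A. a c' * mass (f c') U) + mass b U"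
    and "finite (supp (\<lambda>t. (\<Sum>c'\<in>A. a c' * f c' t) + b t))"
proof -
  have f1: "\<forall>c'\<in>A. finite (supp (\<lambda>t. a c' * f c' t))" using assms(2) by (simp add: supp_scale)
  have fs: "finite (supp (\<lambda>t. \<Sum>c'\<in>A. a c' * f c' t))"
    using supp_sum_fin[OF assms(1) f1] by simp
  show "finite (supp (\<lambda>t. (\<Sum>c'\<in>A. a c' * f c' t) + b t))"
    using supp_add[OF fs assms(3)] by simp
  have "mass (\<lambda>t. (\<Sum>c'\<in>A. a c' * f c' t) + b t) U = mass (\<lambda>t. \<Sum>c'\<in>A. a c' * f c' t) U + mass b U"
    using mass_add[OF fs assms(3)] by simp
  also have "mass (\<lambda>t. \<Sum>c'\<in>A. a c' * f c' t) U = (\<Sum>c'\<in>A. mass (\<lambda>t. a c' * f c' t) U)"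
    using mass_sum[OF assms(1) f1] by simp
  also have "\<dots> = (\<Sum>c'\<in>A. a c' * mass (f c') U)" by (simp add: mass_scale)
  finally show "mass (\<lambda>t. (\<Sum>c'\<in>A. a c' * f c' t) + b t) U = (\<Sum>c'\<in>A. a c' * mass (f c') U) + mass b U" .
qed

lemma outer_mass:
  assumes "finite I" "\<forall>k\<in>I. finite (supp (F k))"
  shows "mass (\<lambda>t. \<Sum>k\<in>I. w k * F k t) U = (\<Sum>k\<in>I. w k * mass (F k) U)"
    and "finite (supp (\<lambda>t. \<Sum>k\<in>I. w k * F k t))"
proof -
  have f1: "\<forall>k\<in>I. finite (supp (\<lambda>t. w k * F k t))" using assms(2) by (simp add: supp_scale)
  show "finite (supp (\<lambda>t. \<Sum>k\<in>I. w k * F k t))" using supp_sum_fin[OF assms(1) f1] by simp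
  show "mass (\<lambda>t. \<Sum>k\<in>I. w k * F k t) U = (\<Sum>k\<in>I. w k * mass (F k) U)"
    using mass_sum[OF assms(1) f1] by (simp add: mass_scale)
qed

locale L =
  fixes act :: "'a \<Rightarrow> 's \<Rightarrow> 's dist" and test :: "'b \<Rightarrow> 's \<Rightarrow> bool" and U :: "'s set"
  assumes act_ok: "\<forall>a t. is_dist (act a t)"

context L
begin

lemma step_props: "step act test P s \<nu> \<Longrightarrow> (\<forall>x. 0 \<le> \<nu> x) \<and> finite (supp \<nu>)"
proof (induction rule: step.induct)
  case (st_act a s)
  then show ?case using act_ok dmap_props[of "act a s"] by (auto simp: is_dist_def)
next
  case (st_skip s)
  then show ?case by (auto simp: point_def supp_def)
next
  case (st_seq P s \<mu> Q) then show ?case using dmap_props by blast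
next
  case (st_parL P s \<mu> Q) then show ?case using dmap_props by blast
next
  case (st_parR Q s \<mu> P) then show ?case using dmap_props by blast
next
  case (st_pch p P s \<mu> Q \<nu>)
  have "supp (\<lambda>x. p * \<mu> x + (1 - p) * \<nu> x) \<subseteq> supp \<mu> \<union> supp \<nu>" by (auto simp: supp_def)
  then show ?case using st_pch by (auto intro: finite_subset)
qed (auto simp: point_def supp_def)

definition gval :: "(('a, 'b, 's) conf \<Rightarrow> real) \<Rightarrow> ('a, 'b, 's) res dist \<Rightarrow> real" where
  "gval W \<nu> = (\<Sum>c'\<in>{c'. \<nu> (Inr c') \<noteq> 0}. \<nu> (Inr c') * W c') + mass (\<lambda>t. \<nu> (Inl t)) U"

primrec Ok :: "nat \<Rightarrow> ('a, 'b, 's) conf \<Rightarrow> bool" where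
  "Ok 0 c = True"
| "Ok (Suc n) c = (\<exists>\<nu>. step act test (fst c) (snd c) \<nu> \<and> (\<forall>c'. \<nu> (Inr c') \<noteq> 0 \<longrightarrow> Ok n c'))"

definition Good :: "nat \<Rightarrow> ('a, 'b, 's) conf \<Rightarrow> ('a, 'b, 's) res dist set" where
  "Good n c = {\<nu>. step act test (fst c) (snd c) \<nu> \<and> (\<forall>c'. \<nu> (Inr c') \<noteq> 0 \<longrightarrow> Ok n c')}"

primrec V :: "nat \<Rightarrow> ('a, 'b, 's) conf \<Rightarrow> real" where
  "V 0 c = 0"
| "V (Suc n) c = Min (gval (V n) ` Good n c)"

lemma Good_fin: "finite (Good n c)"
  unfolding Good_def by (rule finite_subset[OF _ step_fin]) auto

lemma Ok_Suc_Good: "Ok (Suc n) c \<longleftrightarrow> Good n c \<noteq> {}"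
  unfolding Good_def Ok.simps by blast

lemma V0: "V 0 = (\<lambda>_. 0)"
  by (rule ext) simp

lemma V_le: "\<nu> \<in> Good n c \<Longrightarrow> V (Suc n) c \<le> gval (V n) \<nu>"
  using Good_fin by simp

lemma V_att: "Ok (Suc n) c \<Longrightarrow> \<exists>\<nu>\<in>Good n c. V (Suc n) c = gval (V n) \<nu>"
proof -
  assume "Ok (Suc n) c"
  then have "gval (V n) ` Good n c \<noteq> {}" using Ok_Suc_Good by blast
  then have "Min (gval (V n) ` Good n c) \<in> gval (V n) ` Good n c"
    using Good_fin by (intro Min_in) auto
  then show ?thesis by auto
qed

lemma gval_mono:
  assumes "step act test P s \<nu>" "\<forall>c'. \<nu> (Inr c') \<noteq> 0 \<longrightarrow> W1 c' \<le> W2 c'"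
  shows "gval W1 \<nu> \<le> gval W2 \<nu>"
proof -
  have "\<forall>x. 0 \<le> \<nu> x" using step_props[OF assms(1)] by blast
  then have "(\<Sum>c'\<in>{c'. \<nu> (Inr c') \<noteq> 0}. \<nu> (Inr c') * W1 c') \<le> (\<Sum>c'\<in>{c'. \<nu> (Inr c') \<noteq> 0}. \<nu> (Inr c') * W2 c')"
    using assms(2) by (intro sum_mono mult_left_mono) auto
  then show ?thesis by (simp add: gval_def)
qed

lemma gval_nonneg0: "step act test P s \<nu> \<Longrightarrow> 0 \<le> gval (\<lambda>_. 0) \<nu>"
  using step_props[of P s \<nu>] by (auto simp: gval_def intro!: mass_nonneg)

lemma Ok_anti: "Ok (Suc n) c \<Longrightarrow> Ok n c"
proof (induction n arbitrary: c)
  case 0 then show ?case by simp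
next
  case (Suc n)
  from Suc.prems obtain \<nu> where "step act test (fst c) (snd c) \<nu>" "\<forall>c'. \<nu> (Inr c') \<noteq> 0 \<longrightarrow> Ok (Suc n) c'"
    by (simp only: Ok.simps) blast
  then show ?case using Suc.IH by (simp only: Ok.simps) blast
qed

lemma Ok_anti_le: "n \<le> m \<Longrightarrow> Ok m c \<Longrightarrow> Ok n c"
proof (induction m)
  case 0 then show ?case by simp
next
  case (Suc m) then show ?case using Ok_anti le_Suc_eq by blast
qed

lemma V_mono_Suc: "Ok (Suc n) c \<Longrightarrow> V n c \<le> V (Suc n) c"
proof (induction n arbitrary: c)
  case 0
  obtain \<nu> where \<nu>: "\<nu> \<in> Good 0 c" "V (Suc 0) c = gval (V 0) \<nu>" using V_att[OF 0] by blast
  have st: "step act test (fst c) (snd c) \<nu>" using \<nu>(1) unfolding Good_def by blast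
  have "0 \<le> gval (\<lambda>_. 0) \<nu>" by (rule gval_nonneg0[OF st])
  then have "0 \<le> gval (V 0) \<nu>" by (simp only: V0)
  then show ?case using \<nu>(2) by simp
next
  case (Suc n)
  obtain \<nu> where \<nu>: "\<nu> \<in> Good (Suc n) c" "V (Suc (Suc n)) c = gval (V (Suc n)) \<nu>"
    using V_att[OF Suc.prems] by blast
  have st: "step act test (fst c) (snd c) \<nu>" and ok: "\<forall>c'. \<nu> (Inr c') \<noteq> 0 \<longrightarrow> Ok (Suc n) c'"
    using \<nu>(1) unfolding Good_def by blast+
  have ok': "\<forall>c'. \<nu> (Inr c') \<noteq> 0 \<longrightarrow> Ok n c'" using ok Ok_anti by blast
  have "\<nu> \<in> Good n c" unfolding Good_def using st ok' by blast
  then have "V (Suc n) c \<le> gval (V n) \<nu>" by (rule V_le)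
  also have "\<dots> \<le> gval (V (Suc n)) \<nu>"
  proof (rule gval_mono[OF st])
    show "\<forall>c'. \<nu> (Inr c') \<noteq> 0 \<longrightarrow> V n c' \<le> V (Suc n) c'" using ok Suc.IH by blast
  qed
  finally show ?case using \<nu>(2) by simp
qed

lemma V_mono: "n \<le> m \<Longrightarrow> Ok m c \<Longrightarrow> V n c \<le> V m c"
proof (induction m)
  case 0 then show ?case by simp
next
  case (Suc m)
  show ?case
  proof (cases "n = Suc m")
    case False
    then have "n \<le> m" using Suc by simp
    then have "V n c \<le> V m c" using Suc Ok_anti by blast
    also have "\<dots> \<le> V (Suc m) c" using V_mono_Suc Suc by blast
    finally show ?thesis .
  qed simp
qed

end



context L begin

lemma gval_comb:
  assumes fin: "\<forall>k<length ws. finite (supp (snd (ws!k)))"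
  shows "gval W (comb ws) = (\<Sum>k<length ws. fst (ws!k) * gval W (snd (ws!k)))"
proof -
  define A where "A k = {c'. snd (ws!k) (Inr c') \<noteq> 0}" for k
  define B where "B = (\<Union>k<length ws. A k)"
  have fA: "finite (A k)" if "k < length ws" for k using fin that fin_inr by (auto simp: A_def)
  have fB: "finite B" unfolding B_def using fA by blast
  have AB: "A k \<subseteq> B" if "k < length ws" for k using that by (auto simp: B_def)
  have sub: "{c'. comb ws (Inr c') \<noteq> 0} \<subseteq> B"
  proof (rule subsetI, rule ccontr)
    fix c' assume "c' \<in> {c'. comb ws (Inr c') \<noteq> 0}" "c' \<notin> B"
    then have "\<forall>k<length ws. snd (ws!k) (Inr c') = 0" by (auto simp: B_def A_def)
    then have "comb ws (Inr c') = 0" by (simp add: comb_def)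
    then show False using \<open>c' \<in> _\<close> by simp
  qed
  have "(\<Sum>c'\<in>{c'. comb ws (Inr c') \<noteq> 0}. comb ws (Inr c') * W c') = (\<Sum>c'\<in>B. comb ws (Inr c') * W c')"
    by (rule sum.mono_neutral_left[OF fB sub]) auto
  also have "\<dots> = (\<Sum>c'\<in>B. \<Sum>k<length ws. fst (ws!k) * snd (ws!k) (Inr c') * W c')"
    by (simp add: comb_def sum_distrib_right)
  also have "\<dots> = (\<Sum>k<length ws. \<Sum>c'\<in>B. fst (ws!k) * snd (ws!k) (Inr c') * W c')"
    by (rule sum.swap)
  also have "\<dots> = (\<Sum>k<length ws. fst (ws!k) * (\<Sum>c'\<in>A k. snd (ws!k) (Inr c') * W c'))"
  proof (rule sum.cong[OF refl])
    fix k assume "k \<in> {..<length ws}"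
    then have "(\<Sum>c'\<in>A k. snd (ws!k) (Inr c') * W c') = (\<Sum>c'\<in>B. snd (ws!k) (Inr c') * W c')"
      using fB AB by (intro sum.mono_neutral_left) (auto simp: A_def)
    then show "(\<Sum>c'\<in>B. fst (ws!k) * snd (ws!k) (Inr c') * W c') = fst (ws!k) * (\<Sum>c'\<in>A k. snd (ws!k) (Inr c') * W c')"
      by (simp add: sum_distrib_left mult.assoc)
  qed
  finally have P1: "(\<Sum>c'\<in>{c'. comb ws (Inr c') \<noteq> 0}. comb ws (Inr c') * W c') =
     (\<Sum>k<length ws. fst (ws!k) * (\<Sum>c'\<in>A k. snd (ws!k) (Inr c') * W c'))" .
  have "(\<lambda>t. comb ws (Inl t)) = (\<lambda>t. \<Sum>k\<in>{..<length ws}. fst (ws!k) * snd (ws!k) (Inl t))"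
    by (simp add: comb_def)
  moreover have "\<forall>k\<in>{..<length ws}. finite (supp (\<lambda>t. snd (ws!k) (Inl t)))" using fin fin_inl by auto
  ultimately have P2: "mass (\<lambda>t. comb ws (Inl t)) U = (\<Sum>k<length ws. fst (ws!k) * mass (\<lambda>t. snd (ws!k) (Inl t)) U)"
    using outer_mass(1)[where I="{..<length ws}" and F="\<lambda>k t. snd (ws!k) (Inl t)" and w="\<lambda>k. fst (ws!k)"] by simp
  show ?thesis unfolding gval_def P1 P2 by (simp add: A_def distrib_left sum.distrib)
qed

end



context L begin

lemma F_low: "\<phi> \<in> Fset act test n P s \<Longrightarrow> finite (supp \<phi>) \<and> Ok n (P,s) \<and> V n (P,s) \<le> mass \<phi> U"
proof (induction n arbitrary: P s \<phi>)
  case 0 then show ?case by simp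
next
  case (Suc n)
  from Suc.prems obtain \<nu> f where st: "step act test P s \<nu>"
    and fc: "\<forall>c'. \<nu> (Inr c') \<noteq> 0 \<longrightarrow> f c' \<in> Fset act test n (fst c') (snd c')"
    and phi: "\<phi> = (\<lambda>t. (\<Sum>c'\<in>{c'. \<nu> (Inr c') \<noteq> 0}. \<nu> (Inr c') * f c' t) + \<nu> (Inl t))"
    by auto
  let ?A = "{c'. \<nu> (Inr c') \<noteq> 0}"
  have IH: "finite (supp (f c')) \<and> Ok n c' \<and> V n c' \<le> mass (f c') U" if "c' \<in> ?A" for c'
    using Suc.IH[of "f c'" "fst c'" "snd c'"] fc that by (cases c') auto
  have nn: "\<forall>x. 0 \<le> \<nu> x" and fs: "finite (supp \<nu>)" using step_props[OF st] by auto
  have fA: "finite ?A" using fin_inr[OF fs] .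
  have fl: "finite (supp (\<lambda>t. \<nu> (Inl t)))" using fin_inl[OF fs] .
  have fsupp: "\<forall>c'\<in>?A. finite (supp (f c'))" using IH by blast
  note im = inner_mass[OF fA fsupp fl, where a="\<lambda>c'. \<nu> (Inr c')"]
  have good: "\<nu> \<in> Good n (P,s)" using st IH by (auto simp: Good_def)
  have "V (Suc n) (P,s) \<le> gval (V n) \<nu>" using V_le[OF good] .
  also have "\<dots> \<le> (\<Sum>c'\<in>?A. \<nu> (Inr c') * mass (f c') U) + mass (\<lambda>t. \<nu> (Inl t)) U"
    unfolding gval_def using IH nn by (intro add_right_mono sum_mono mult_left_mono) auto
  also have "\<dots> = mass \<phi> U" using im(1) phi by simp
  finally show ?case using im(2) phi good Ok_Suc_Good by auto
qed

lemma F_att: "Ok n (P,s) \<Longrightarrow> \<exists>\<phi>\<in>Fset act test n P s. mass \<phi> U = V n (P,s)"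
proof (induction n arbitrary: P s)
  case 0 then show ?case by simp
next
  case (Suc n)
  then obtain \<nu> where good: "\<nu> \<in> Good n (P,s)" and veq: "V (Suc n) (P,s) = gval (V n) \<nu>"
    using V_att by blast
  then have st: "step act test P s \<nu>" and ok: "\<forall>c'. \<nu> (Inr c') \<noteq> 0 \<longrightarrow> Ok n c'"
    by (auto simp: Good_def)
  let ?A = "{c'. \<nu> (Inr c') \<noteq> 0}"
  define f where "f c' = (SOME \<phi>. \<phi> \<in> Fset act test n (fst c') (snd c') \<and> mass \<phi> U = V n c')" for c'
  have fc: "f c' \<in> Fset act test n (fst c') (snd c') \<and> mass (f c') U = V n c'" if "c' \<in> ?A" for c'
  proof -
    have "\<exists>\<phi>. \<phi> \<in> Fset act test n (fst c') (snd c') \<and> mass \<phi> U = V n c'"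
      using Suc.IH[of "fst c'" "snd c'"] ok that by (cases c') auto
    then show ?thesis unfolding f_def by (rule someI_ex)
  qed
  have IH: "finite (supp (f c'))" if "c' \<in> ?A" for c' using F_low fc that by blast
  have fs: "finite (supp \<nu>)" using step_props[OF st] by auto
  have fA: "finite ?A" using fin_inr[OF fs] .
  have fl: "finite (supp (\<lambda>t. \<nu> (Inl t)))" using fin_inl[OF fs] .
  have fsupp: "\<forall>c'\<in>?A. finite (supp (f c'))" using IH by blast
  note im = inner_mass[OF fA fsupp fl, where a="\<lambda>c'. \<nu> (Inr c')"]
  define \<phi> where "\<phi> = (\<lambda>t. (\<Sum>c'\<in>?A. \<nu> (Inr c') * f c' t) + \<nu> (Inl t))"
  have "\<phi> \<in> Fset act test (Suc n) P s"
    unfolding Fset.simps mem_Collect_eq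
  proof (intro exI[of _ \<nu>] exI[of _ f] conjI)
    show "step act test P s \<nu>" by (rule st)
    show "\<forall>c'. \<nu> (Inr c') \<noteq> 0 \<longrightarrow> f c' \<in> Fset act test n (fst c') (snd c')" using fc by blast
    show "\<phi> = (\<lambda>t. (\<Sum>c'\<in>?A. \<nu> (Inr c') * f c' t) + \<nu> (Inl t))" by (simp add: \<phi>_def)
  qed
  moreover have "mass \<phi> U = V (Suc n) (P,s)"
    unfolding veq gval_def using im(1) fc by (simp add: \<phi>_def)
  ultimately show ?case by blast
qed

end



context L begin

lemma big_mass:
  assumes fn: "\<forall>k<length ws. finite (supp (snd (ws!k)))"
    and fm: "\<forall>k<length ws. \<forall>c'. snd (ws!k) (Inr c') \<noteq> 0 \<longrightarrow> finite (supp (m k c'))"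
  shows "mass (\<lambda>t. \<Sum>k<length ws. fst (ws ! k) *
                  ((\<Sum>c'\<in>{c'. snd (ws ! k) (Inr c') \<noteq> 0}. snd (ws ! k) (Inr c') * m k c' t)
                   + snd (ws ! k) (Inl t))) U
       = (\<Sum>k<length ws. fst (ws ! k) *
                  ((\<Sum>c'\<in>{c'. snd (ws ! k) (Inr c') \<noteq> 0}. snd (ws ! k) (Inr c') * mass (m k c') U)
                   + mass (\<lambda>t. snd (ws ! k) (Inl t)) U))"
    and "finite (supp (\<lambda>t. \<Sum>k<length ws. fst (ws ! k) *
                  ((\<Sum>c'\<in>{c'. snd (ws ! k) (Inr c') \<noteq> 0}. snd (ws ! k) (Inr c') * m k c' t)
                   + snd (ws ! k) (Inl t))))"
proof -
  define F where "F k = (\<lambda>t. (\<Sum>c'\<in>{c'. snd (ws ! k) (Inr c') \<noteq> 0}. snd (ws ! k) (Inr c') * m k c' t)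
                   + snd (ws ! k) (Inl t))" for k
  have im: "mass (F k) U = (\<Sum>c'\<in>{c'. snd (ws ! k) (Inr c') \<noteq> 0}. snd (ws ! k) (Inr c') * mass (m k c') U)
                   + mass (\<lambda>t. snd (ws ! k) (Inl t)) U \<and> finite (supp (F k))" if "k < length ws" for k
  proof -
    have fA: "finite {c'. snd (ws ! k) (Inr c') \<noteq> 0}" using fin_inr fn that by blast
    have fs: "\<forall>c'\<in>{c'. snd (ws ! k) (Inr c') \<noteq> 0}. finite (supp (m k c'))" using fm that by blast
    have fl: "finite (supp (\<lambda>t. snd (ws ! k) (Inl t)))" using fin_inl fn that by blast
    show ?thesis using inner_mass[OF fA fs fl, where a="\<lambda>c'. snd (ws!k) (Inr c')"] unfolding F_def by simp
  qed
  have "\<forall>k\<in>{..<length ws}. finite (supp (F k))" using im by auto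
  note om = outer_mass[OF finite_lessThan this, where w="\<lambda>k. fst (ws!k)"]
  show "finite (supp (\<lambda>t. \<Sum>k<length ws. fst (ws ! k) *
                  ((\<Sum>c'\<in>{c'. snd (ws ! k) (Inr c') \<noteq> 0}. snd (ws ! k) (Inr c') * m k c' t)
                   + snd (ws ! k) (Inl t))))" using om(2) by (simp add: F_def)
  show "mass (\<lambda>t. \<Sum>k<length ws. fst (ws ! k) *
                  ((\<Sum>c'\<in>{c'. snd (ws ! k) (Inr c') \<noteq> 0}. snd (ws ! k) (Inr c') * m k c' t)
                   + snd (ws ! k) (Inl t))) U
       = (\<Sum>k<length ws. fst (ws ! k) *
                  ((\<Sum>c'\<in>{c'. snd (ws ! k) (Inr c') \<noteq> 0}. snd (ws ! k) (Inr c') * mass (m k c') U)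
                   + mass (\<lambda>t. snd (ws ! k) (Inl t)) U))"
    using om(1) im by (simp add: F_def)
qed

lemma B_fin: "bigstep act test Sc n h c \<mu> \<Longrightarrow> finite (supp \<mu>)"
proof (induction n arbitrary: h c \<mu>)
  case 0 then show ?case by simp
next
  case (Suc n)
  then obtain ws m where cs: "convex_steps act test c ws"
    and mk: "\<forall>k<length ws. \<forall>c'. snd (ws ! k) (Inr c') \<noteq> 0 \<longrightarrow>
              bigstep act test Sc n (h @ [(c, snd (ws ! k))]) c' (m k c')"
    and mu: "\<mu> = (\<lambda>t. \<Sum>k<length ws. fst (ws ! k) *
                  ((\<Sum>c'\<in>{c'. snd (ws ! k) (Inr c') \<noteq> 0}. snd (ws ! k) (Inr c') * m k c' t)
                   + snd (ws ! k) (Inl t)))"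
    by auto
  have fn: "\<forall>k<length ws. finite (supp (snd (ws!k)))"
    using cs step_props by (auto simp: convex_steps_def)
  have fm: "\<forall>k<length ws. \<forall>c'. snd (ws!k) (Inr c') \<noteq> 0 \<longrightarrow> finite (supp (m k c'))"
    using mk Suc.IH by blast
  show ?case using big_mass(2)[OF fn fm] mu by simp
qed

lemma B_low: "bigstep act test Sc n h c \<mu> \<Longrightarrow> Ok n c \<and> V n c \<le> mass \<mu> U"
proof (induction n arbitrary: h c \<mu>)
  case 0 then show ?case by simp
next
  case (Suc n)
  then obtain ws m where cs: "convex_steps act test c ws"
    and mk: "\<forall>k<length ws. \<forall>c'. snd (ws ! k) (Inr c') \<noteq> 0 \<longrightarrow>
              bigstep act test Sc n (h @ [(c, snd (ws ! k))]) c' (m k c')"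
    and mu: "\<mu> = (\<lambda>t. \<Sum>k<length ws. fst (ws ! k) *
                  ((\<Sum>c'\<in>{c'. snd (ws ! k) (Inr c') \<noteq> 0}. snd (ws ! k) (Inr c') * m k c' t)
                   + snd (ws ! k) (Inl t)))"
    by auto
  have st: "\<forall>k<length ws. step act test (fst c) (snd c) (snd (ws!k)) \<and> 0 \<le> fst (ws!k)"
    and w1: "(\<Sum>k<length ws. fst (ws ! k)) = 1"
    using cs by (auto simp: convex_steps_def)
  have fn: "\<forall>k<length ws. finite (supp (snd (ws!k)))"
    using st step_props by blast
  have fm: "\<forall>k<length ws. \<forall>c'. snd (ws!k) (Inr c') \<noteq> 0 \<longrightarrow> finite (supp (m k c'))"
    using mk B_fin by blast
  have IH: "Ok n c' \<and> V n c' \<le> mass (m k c') U" if "k < length ws" "snd (ws!k) (Inr c') \<noteq> 0" for k c'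
    using mk Suc.IH that by blast
  have good: "snd (ws!k) \<in> Good n c" if "k < length ws" for k
    using st IH that by (auto simp: Good_def)
  have "length ws \<noteq> 0" using w1 by auto
  then have "Good n c \<noteq> {}" using good by blast
  then have ok: "Ok (Suc n) c" using Ok_Suc_Good by blast
  have "V (Suc n) c = (\<Sum>k<length ws. fst (ws ! k) * V (Suc n) c)"
    using w1 by (simp add: sum_distrib_right[symmetric])
  also have "\<dots> \<le> (\<Sum>k<length ws. fst (ws ! k) * gval (V n) (snd (ws!k)))"
    using good st V_le by (intro sum_mono mult_left_mono) auto
  also have "\<dots> \<le> (\<Sum>k<length ws. fst (ws ! k) *
                  ((\<Sum>c'\<in>{c'. snd (ws ! k) (Inr c') \<noteq> 0}. snd (ws ! k) (Inr c') * mass (m k c') U)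
                   + mass (\<lambda>t. snd (ws ! k) (Inl t)) U))"
  proof (rule sum_mono, rule mult_left_mono)
    fix k assume k: "k \<in> {..<length ws}"
    then have nn: "\<forall>x. 0 \<le> snd (ws!k) x" using st step_props by auto
    show "gval (V n) (snd (ws!k)) \<le> (\<Sum>c'\<in>{c'. snd (ws ! k) (Inr c') \<noteq> 0}. snd (ws ! k) (Inr c') * mass (m k c') U)
                   + mass (\<lambda>t. snd (ws ! k) (Inl t)) U"
      unfolding gval_def using IH k nn by (intro add_right_mono sum_mono mult_left_mono) auto
    show "0 \<le> fst (ws!k)" using st k by auto
  qed
  also have "\<dots> = mass \<mu> U" using big_mass(1)[OF fn fm] mu by simp
  finally show ?case using ok by simp
qed

end



lemma inf_ge: "infinite (S::nat set) \<Longrightarrow> \<exists>a\<in>S. n \<le> a"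
proof (rule ccontr)
  assume "infinite S" "\<not> (\<exists>a\<in>S. n \<le> a)"
  then have "S \<subseteq> {..<n}" by auto
  then show False using \<open>infinite S\<close> finite_subset by blast
qed

context L begin

definition safe :: "('a, 'b, 's) conf \<Rightarrow> bool" where
  "safe c \<longleftrightarrow> (\<forall>n. Ok n c)"

lemma choice:
  assumes "safe c"
  shows "\<exists>\<nu>. step act test (fst c) (snd c) \<nu> \<and> (\<forall>c'. \<nu> (Inr c') \<noteq> 0 \<longrightarrow> safe c')
           \<and> infinite {n. gval (V n) \<nu> \<le> V (Suc n) c}"
proof -
  define h where "h n = (SOME \<nu>. \<nu> \<in> Good n c \<and> V (Suc n) c = gval (V n) \<nu>)" for n
  have hp: "h n \<in> Good n c \<and> V (Suc n) c = gval (V n) (h n)" for n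
  proof -
    have "Ok (Suc n) c" using assms by (simp add: safe_def)
    then have "\<exists>\<nu>. \<nu> \<in> Good n c \<and> V (Suc n) c = gval (V n) \<nu>" using V_att by blast
    then show ?thesis unfolding h_def by (rule someI_ex)
  qed
  have "range h \<subseteq> {\<nu>. step act test (fst c) (snd c) \<nu>}" using hp unfolding Good_def by blast
  then have "finite (h ` UNIV)" by (rule finite_subset[OF _ step_fin])
  then obtain a0 where inf: "infinite {a. h a = h a0}"
    using pigeonhole_infinite[of "UNIV :: nat set" h] by auto
  let ?\<nu> = "h a0"
  have r1: "step act test (fst c) (snd c) ?\<nu>" using hp[of a0] unfolding Good_def by blast
  have sub: "{a. h a = h a0} \<subseteq> {n. gval (V n) ?\<nu> \<le> V (Suc n) c}"
  proof
    fix a assume "a \<in> {a. h a = h a0}"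
    then have "h a = h a0" by simp
    then show "a \<in> {n. gval (V n) ?\<nu> \<le> V (Suc n) c}" using hp[of a] by simp
  qed
  have r2: "infinite {n. gval (V n) ?\<nu> \<le> V (Suc n) c}"
    using inf finite_subset[OF sub] by blast
  have r3: "safe c'" if "?\<nu> (Inr c') \<noteq> 0" for c'
    unfolding safe_def
  proof
    fix n
    obtain a where a: "a \<in> {a. h a = h a0}" "n \<le> a" using inf_ge[OF inf] by blast
    then have "h a = h a0" by simp
    then have "h a0 \<in> Good a c" using hp[of a] by simp
    then have "Ok a c'" unfolding Good_def using that by blast
    then show "Ok n c'" using Ok_anti_le a(2) by blast
  qed
  show ?thesis using r1 r2 r3 by blast
qed

definition sigma :: "('a, 'b, 's) conf \<Rightarrow> ('a, 'b, 's) res dist" where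
  "sigma c = (SOME \<nu>. step act test (fst c) (snd c) \<nu> \<and> (safe c \<longrightarrow> (\<forall>c'. \<nu> (Inr c') \<noteq> 0 \<longrightarrow> safe c')
           \<and> infinite {n. gval (V n) \<nu> \<le> V (Suc n) c}))"

lemma sigma_prop:
  assumes "\<exists>\<nu>. step act test (fst c) (snd c) \<nu>"
  shows "step act test (fst c) (snd c) (sigma c) \<and> (safe c \<longrightarrow> (\<forall>c'. sigma c (Inr c') \<noteq> 0 \<longrightarrow> safe c')
           \<and> infinite {n. gval (V n) (sigma c) \<le> V (Suc n) c})"
proof -
  have "\<exists>\<nu>. step act test (fst c) (snd c) \<nu> \<and> (safe c \<longrightarrow> (\<forall>c'. \<nu> (Inr c') \<noteq> 0 \<longrightarrow> safe c')
           \<and> infinite {n. gval (V n) \<nu> \<le> V (Suc n) c})"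
  proof (cases "safe c")
    case True then show ?thesis using choice by blast
  next
    case False then show ?thesis using assms by blast
  qed
  then show ?thesis unfolding sigma_def by (rule someI_ex)
qed

lemma safe_step: "safe c \<Longrightarrow> \<exists>\<nu>. step act test (fst c) (snd c) \<nu>"
  unfolding safe_def by (metis Ok.simps(2))

definition Sched :: "('a, 'b, 's) sched" where
  "Sched x = (if \<exists>\<nu>. step act test (fst (snd x)) (snd (snd x)) \<nu> then Some (sigma (snd x)) else None)"

lemma convex_single: "step act test (fst c) (snd c) \<nu> \<Longrightarrow> convex_steps act test c [(1, \<nu>)]"
  by (simp add: convex_steps_def)

lemma Sched_valid: "valid_sched act test Sched"
  unfolding valid_sched_def
proof (intro allI impI)
  fix h c d assume "Sched (h, c) = Some d"
  then have ex: "\<exists>\<nu>. step act test (fst c) (snd c) \<nu>" and d: "d = sigma c"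
    by (auto simp: Sched_def split: if_splits)
  then have "convex_steps act test c [(1, sigma c)]" using sigma_prop convex_single by blast
  then show "\<exists>ws. convex_steps act test c ws \<and> d = comb ws" using d by (intro exI[of _ "[(1, sigma c)]"]) simp
qed

lemma Sched_nb: "safe c \<Longrightarrow> \<exists>\<mu>. bigstep act test Sched n h c \<mu>"
proof (induction n arbitrary: h c)
  case 0 then show ?case by simp
next
  case (Suc n)
  have ex: "\<exists>\<nu>. step act test (fst c) (snd c) \<nu>" using safe_step Suc.prems by blast
  note sp = sigma_prop[OF ex]
  define ws where "ws = [(1::real, sigma c)]"
  define m where "m k c' = (SOME \<mu>. bigstep act test Sched n (h @ [(c, sigma c)]) c' \<mu>)" for k :: nat and c'
  have cs: "convex_steps act test c ws" unfolding ws_def using sp convex_single by blast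
  have sc: "Sched (h, c) = Some (comb ws)" using ex by (simp add: Sched_def ws_def)
  have mk: "\<forall>k<length ws. \<forall>c'. snd (ws ! k) (Inr c') \<noteq> 0 \<longrightarrow>
              bigstep act test Sched n (h @ [(c, snd (ws ! k))]) c' (m k c')"
  proof (intro allI impI)
    fix k c' assume "k < length ws" "snd (ws ! k) (Inr c') \<noteq> 0"
    then have "sigma c (Inr c') \<noteq> 0" "snd (ws!k) = sigma c" by (auto simp: ws_def)
    then have "safe c'" using sp Suc.prems by blast
    then have "\<exists>\<mu>. bigstep act test Sched n (h @ [(c, sigma c)]) c' \<mu>" using Suc.IH by blast
    then show "bigstep act test Sched n (h @ [(c, snd (ws ! k))]) c' (m k c')"
      unfolding m_def \<open>snd (ws!k) = sigma c\<close> by (rule someI_ex)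
  qed
  show ?case using cs sc mk by (simp only: bigstep.simps) blast
qed

lemma B_up: "bigstep act test Sched n h c \<mu> \<Longrightarrow> safe c \<Longrightarrow> \<exists>M. mass \<mu> U \<le> V M c"
proof (induction n arbitrary: h c \<mu>)
  case 0 then show ?case by (intro exI[of _ 0]) simp
next
  case (Suc n)
  then obtain ws m where cs: "convex_steps act test c ws"
    and sc: "Sched (h, c) = Some (comb ws)"
    and mk: "\<forall>k<length ws. \<forall>c'. snd (ws ! k) (Inr c') \<noteq> 0 \<longrightarrow>
              bigstep act test Sched n (h @ [(c, snd (ws ! k))]) c' (m k c')"
    and mu: "\<mu> = (\<lambda>t. \<Sum>k<length ws. fst (ws ! k) *
                  ((\<Sum>c'\<in>{c'. snd (ws ! k) (Inr c') \<noteq> 0}. snd (ws ! k) (Inr c') * m k c' t)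
                   + snd (ws ! k) (Inl t)))"
    by auto
  have ex: "\<exists>\<nu>. step act test (fst c) (snd c) \<nu>" using safe_step Suc.prems by blast
  note sp = sigma_prop[OF ex]
  have combeq: "comb ws = sigma c" using sc ex by (simp add: Sched_def)
  have st: "\<forall>k<length ws. step act test (fst c) (snd c) (snd (ws!k)) \<and> 0 \<le> fst (ws!k)"
    using cs by (auto simp: convex_steps_def)
  have fn: "\<forall>k<length ws. finite (supp (snd (ws!k)))"
    using st step_props by blast
  have fm: "\<forall>k<length ws. \<forall>c'. snd (ws!k) (Inr c') \<noteq> 0 \<longrightarrow> finite (supp (m k c'))"
    using mk B_fin by blast
  have pos: "sigma c (Inr c') \<noteq> 0" if "k < length ws" "fst (ws!k) \<noteq> 0" "snd (ws!k) (Inr c') \<noteq> 0" for k c'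
  proof -
    have nn: "\<forall>j<length ws. 0 \<le> fst (ws!j) * snd (ws!j) (Inr c')"
      using st step_props by auto
    have "0 < fst (ws!k) * snd (ws!k) (Inr c')"
      using that nn st step_props by (metis less_eq_real_def mult_pos_pos)
    also have "\<dots> \<le> (\<Sum>j<length ws. fst (ws!j) * snd (ws!j) (Inr c'))"
      using nn that by (intro member_le_sum) auto
    finally show ?thesis using combeq[symmetric] by (simp add: comb_def)
  qed
  have safe': "safe c'" if "sigma c (Inr c') \<noteq> 0" for c' using sp Suc.prems that by blast
  define K where "K = (\<Union>k<length ws. {k} \<times> {c'. snd (ws!k) (Inr c') \<noteq> 0 \<and> fst (ws!k) \<noteq> 0})"
  have fK: "finite K" unfolding K_def
  proof (intro finite_UN_I)
    fix k assume "k \<in> {..<length ws}"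
    then have "finite {c'. snd (ws!k) (Inr c') \<noteq> 0}" using fn fin_inr by blast
    then have "finite {c'. snd (ws ! k) (Inr c') \<noteq> 0 \<and> fst (ws ! k) \<noteq> 0}" by (rule finite_subset[rotated]) auto
    then show "finite ({k} \<times> {c'. snd (ws ! k) (Inr c') \<noteq> 0 \<and> fst (ws ! k) \<noteq> 0})" by simp
  qed simp
  define Mf where "Mf kc = (SOME M. mass (m (fst kc) (snd kc)) U \<le> V M (snd kc))" for kc
  have Mf: "mass (m k c') U \<le> V (Mf (k, c')) c'" if "(k, c') \<in> K" for k c'
  proof -
    have k: "k < length ws" "snd (ws!k) (Inr c') \<noteq> 0" "fst (ws!k) \<noteq> 0" using that by (auto simp: K_def)
    then have "\<exists>M. mass (m k c') U \<le> V M c'"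
      using Suc.IH[OF mk[rule_format, OF k(1,2)] safe'[OF pos[OF k(1,3,2)]]] by simp
    then show ?thesis unfolding Mf_def fst_conv snd_conv by (rule someI_ex)
  qed
  define M0 where "M0 = Max (insert 0 (Mf ` K))"
  have M0: "Mf (k, c') \<le> M0" if "(k, c') \<in> K" for k c'
    unfolding M0_def by (rule Max_ge) (use fK that in auto)
  have bnd: "mass (m k c') U \<le> V M0 c'" if "(k, c') \<in> K" for k c'
  proof -
    have "k < length ws" "snd (ws!k) (Inr c') \<noteq> 0" "fst (ws!k) \<noteq> 0" using that by (auto simp: K_def)
    then have "safe c'" using pos safe' by blast
    then have okM: "Ok M0 c'" by (simp add: safe_def)
    have "V (Mf (k, c')) c' \<le> V M0 c'" by (rule V_mono[OF M0[OF that] okM])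
    then show ?thesis using Mf[OF that] by linarith
  qed
  have "mass \<mu> U = (\<Sum>k<length ws. fst (ws ! k) *
                  ((\<Sum>c'\<in>{c'. snd (ws ! k) (Inr c') \<noteq> 0}. snd (ws ! k) (Inr c') * mass (m k c') U)
                   + mass (\<lambda>t. snd (ws ! k) (Inl t)) U))"
    using big_mass(1)[OF fn fm] mu by simp
  also have "\<dots> \<le> (\<Sum>k<length ws. fst (ws ! k) * gval (V M0) (snd (ws!k)))"
  proof (rule sum_mono)
    fix k assume k: "k \<in> {..<length ws}"
    show "fst (ws ! k) *
                  ((\<Sum>c'\<in>{c'. snd (ws ! k) (Inr c') \<noteq> 0}. snd (ws ! k) (Inr c') * mass (m k c') U)
                   + mass (\<lambda>t. snd (ws ! k) (Inl t)) U) \<le> fst (ws ! k) * gval (V M0) (snd (ws!k))"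
    proof (cases "fst (ws!k) = 0")
      case False
      have nn: "\<forall>x. 0 \<le> snd (ws!k) x" using st step_props k by auto
      have "(\<Sum>c'\<in>{c'. snd (ws ! k) (Inr c') \<noteq> 0}. snd (ws ! k) (Inr c') * mass (m k c') U)
                   + mass (\<lambda>t. snd (ws ! k) (Inl t)) U \<le> gval (V M0) (snd (ws!k))"
        unfolding gval_def using bnd k nn False
        by (intro add_right_mono sum_mono mult_left_mono) (auto simp: K_def)
      then show ?thesis using st k by (intro mult_left_mono) auto
    qed simp
  qed
  also have "\<dots> = gval (V M0) (sigma c)" using gval_comb[OF fn] combeq by simp
  finally have m1: "mass \<mu> U \<le> gval (V M0) (sigma c)" .
  have infs: "infinite {n. gval (V n) (sigma c) \<le> V (Suc n) c}" using sp Suc.prems by blast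
  obtain m' where m': "gval (V m') (sigma c) \<le> V (Suc m') c" "M0 \<le> m'"
    using inf_ge[OF infs, of M0] by blast
  have "gval (V M0) (sigma c) \<le> gval (V m') (sigma c)"
  proof (rule gval_mono[of "fst c" "snd c"])
    show "step act test (fst c) (snd c) (sigma c)" using sp by blast
    show "\<forall>c'. sigma c (Inr c') \<noteq> 0 \<longrightarrow> V M0 c' \<le> V m' c'"
    proof (intro allI impI)
      fix c' assume "sigma c (Inr c') \<noteq> 0"
      then have "Ok m' c'" using safe' by (simp add: safe_def)
      then show "V M0 c' \<le> V m' c'" using V_mono m'(2) by blast
    qed
  qed
  then show ?case using m1 m'(1) by (intro exI[of _ "Suc m'"]) linarith
qed

end



theorem mainTheorem11:
  fixes act :: "'a \<Rightarrow> 's \<Rightarrow> 's dist" and test :: "'b \<Rightarrow> 's \<Rightarrow> bool"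
    and P :: "('a, 'b) prog" and s :: 's and U :: "'s set" and p :: real
  assumes "\<forall>a t. is_dist (act a t)"
    and "p \<in> \<rat>" and "0 \<le> p" and "p < 1"
  shows "sat_box act test P s p U \<longleftrightarrow> (\<exists>n. \<forall>\<mu>\<in>Fset act test n P s. mass \<mu> U > p)"
proof -
  interpret L act test U using assms(1) by unfold_locales
  show ?thesis
  proof
    assume sb: "sat_box act test P s p U"
    show "\<exists>n. \<forall>\<mu>\<in>Fset act test n P s. mass \<mu> U > p"
    proof (rule ccontr)
      assume "\<not> (\<exists>n. \<forall>\<mu>\<in>Fset act test n P s. mass \<mu> U > p)"
      then have bad: "\<forall>n. \<exists>\<phi>\<in>Fset act test n P s. mass \<phi> U \<le> p" by (auto simp: not_less)
      have sf: "safe (P, s)" unfolding safe_def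
      proof
        fix n
        obtain \<phi> where "\<phi> \<in> Fset act test n P s" using bad by blast
        then show "Ok n (P, s)" using F_low by blast
      qed
      have Vp: "V n (P, s) \<le> p" for n
      proof -
        obtain \<phi> where "\<phi> \<in> Fset act test n P s" "mass \<phi> U \<le> p" using bad by blast
        then show ?thesis using F_low[of \<phi> n P s] by linarith
      qed
      have "non_blocking act test Sched P s" unfolding non_blocking_def using Sched_nb[OF sf] by blast
      then obtain n \<mu> where mu: "bigstep act test Sched n [] (P, s) \<mu>" "mass \<mu> U > p"
        using sb Sched_valid unfolding sat_box_def by blast
      then obtain M where "mass \<mu> U \<le> V M (P, s)" using B_up sf by blast
      then show False using Vp[of M] mu(2) by linarith
    qed
  next
    assume "\<exists>n. \<forall>\<mu>\<in>Fset act test n P s. mass \<mu> U > p"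
    then obtain n where H: "\<forall>\<mu>\<in>Fset act test n P s. mass \<mu> U > p" by blast
    show "sat_box act test P s p U" unfolding sat_box_def
    proof (intro allI impI)
      fix Sc assume "valid_sched act test Sc" "non_blocking act test Sc P s"
      then obtain \<mu> where mu: "bigstep act test Sc n [] (P, s) \<mu>" unfolding non_blocking_def by blast
      have ok: "Ok n (P, s)" and le: "V n (P, s) \<le> mass \<mu> U" using B_low[OF mu] by auto
      obtain \<phi> where "\<phi> \<in> Fset act test n P s" "mass \<phi> U = V n (P, s)" using F_att[OF ok] by blast
      then have "p < V n (P, s)" using H by force
      then show "\<exists>n \<mu>. bigstep act test Sc n [] (P, s) \<mu> \<and> p < mass \<mu> U"
        using mu le by (intro exI[of _ n] exI[of _ \<mu>]) simp
    qed
  qed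
qed



end
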